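(* For all integers $n\ge 2$ and $k\ge 1$, the number of edges of $H_{n,k}$ is $$|E_{n,k}|=\frac{3}{2}n^{k+1}-(n-1)^{k+1}-2n^k-\frac{n}{2}+1 .$$
   Context: Let $n\ge 2$ and $k\ge 1$ be integers. $H_{n,k}$ is the simple undirected graph with vertex set $V_{n,k}=\mathbb{Z}_n^k$ (so $|V_{n,k}|=n^k$), whose vertices are written as strings $x_1x_2\ldots x_k$ with $x_j\in\mathbb{Z}_n=\{0,1,\ldots,n-1\}$. Two distinct vertices are adjacent if and only if they are related by one of the following rules. For $i=0$ the prefix $x_1\ldots x_i$ is empty, and "$0\ldots0$" denotes a string of zeros completing the word to length $k$. (R1) $x_1\ldots x_{k-1}x_k\sim x_1\ldots x_{k-1}y_k$ whenever $y_k\neq x_k$. (R2) For $0\le i\le k-2$: $x_1\ldots x_i0\ldots0\sim x_1\ldots x_ix_{i+1}\ldots x_k$ whenever $x_j\neq 0$ for all $i+1\le j\le k$. (R3) For $1\le i\le k-1$: $x_1\ldots x_{i-1}x_i0\ldots0\sim x_1\ldots x_{i-1}y_i0\ldots0$ whenever $x_i,y_i\neq0$ and $x_i\ne y_i$. In particular, $H_{n,1}$ is the complete graph $K_n$. $E_{n,k}$ denotes the edge set of $H_{n,k}$. *)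

theory Defs
  imports Complex_Main
begin

text \<open>Vertices of H_{n,k}: words x_1...x_k over Z_n, represented as lists of
length k with entries in {0..<n}; list position j (0-based) holds x_{j+1}.\<close>

definition Vset :: "nat \<Rightarrow> nat \<Rightarrow> nat list set" where
  "Vset n k = {xs. length xs = k \<and> (\<forall>x\<in>set xs. x < n)}"

definition R1 :: "nat \<Rightarrow> nat list \<Rightarrow> nat list \<Rightarrow> bool" where
  "R1 k x y \<longleftrightarrow> take (k - 1) x = take (k - 1) y \<and> x ! (k - 1) \<noteq> y ! (k - 1)"

definition R2 :: "nat \<Rightarrow> nat list \<Rightarrow> nat list \<Rightarrow> bool" where
  "R2 k x y \<longleftrightarrow> (\<exists>i. i + 2 \<le> k \<and> take i x = take i y \<and>
      drop i x = replicate (k - i) 0 \<and> (\<forall>j. i \<le> j \<and> j < k \<longrightarrow> y ! j \<noteq> 0))"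

text \<open>(R3) for 1 \<le> i \<le> k-1: x_1..x_{i-1} x_i 0..0 ~ x_1..x_{i-1} y_i 0..0,
  x_i, y_i nonzero and distinct (position i-1 in 0-based indexing).\<close>
definition R3 :: "nat \<Rightarrow> nat list \<Rightarrow> nat list \<Rightarrow> bool" where
  "R3 k x y \<longleftrightarrow> (\<exists>i. 1 \<le> i \<and> i \<le> k - 1 \<and> take (i - 1) x = take (i - 1) y \<and>
      x ! (i - 1) \<noteq> 0 \<and> y ! (i - 1) \<noteq> 0 \<and> x ! (i - 1) \<noteq> y ! (i - 1) \<and>
      drop i x = replicate (k - i) 0 \<and> drop i y = replicate (k - i) 0)"

definition Hadj :: "nat \<Rightarrow> nat list \<Rightarrow> nat list \<Rightarrow> bool" where
  "Hadj k x y \<longleftrightarrow> R1 k x y \<or> R2 k x y \<or> R3 k x y"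

definition Eset :: "nat \<Rightarrow> nat \<Rightarrow> nat list set set" where
  "Eset n k = {{x, y} | x y. x \<in> Vset n k \<and> y \<in> Vset n k \<and> x \<noteq> y \<and>
      (Hadj k x y \<or> Hadj k y x)}"

end

theory Submission imports Defs begin

lemma R1_cons:
  assumes "k \<ge> 1"
  shows "R1 (Suc k) (a#x) (b#y) \<longleftrightarrow> a = b \<and> R1 k x y"
proof -
  obtain k' where k: "k = Suc k'" using assms by (cases k) auto
  show ?thesis unfolding R1_def k by auto
qed

lemma ex_split_nat: "(\<exists>i::nat. P i) \<longleftrightarrow> P 0 \<or> (\<exists>i. P (Suc i))"
  by (metis not0_implies_Suc)

lemma all_shift:
  "(\<forall>j. Suc i \<le> j \<and> j < Suc k \<longrightarrow> (b#y) ! j \<noteq> (0::nat)) \<longleftrightarrow> (\<forall>j. i \<le> j \<and> j < k \<longrightarrow> y ! j \<noteq> 0)"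
proof
  assume H: "\<forall>j. Suc i \<le> j \<and> j < Suc k \<longrightarrow> (b#y) ! j \<noteq> 0"
  show "\<forall>j. i \<le> j \<and> j < k \<longrightarrow> y ! j \<noteq> 0"
  proof (intro allI impI)
    fix j assume "i \<le> j \<and> j < k"
    then show "y ! j \<noteq> 0" using H[rule_format, of "Suc j"] by simp
  qed
next
  assume H: "\<forall>j. i \<le> j \<and> j < k \<longrightarrow> y ! j \<noteq> 0"
  show "\<forall>j. Suc i \<le> j \<and> j < Suc k \<longrightarrow> (b#y) ! j \<noteq> 0"
  proof (intro allI impI)
    fix j assume j: "Suc i \<le> j \<and> j < Suc k"
    then obtain j' where "j = Suc j'" by (cases j) auto
    then show "(b#y) ! j \<noteq> 0" using H j by auto
  qed
qed

lemma all0: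
  assumes "length y = k"
  shows "(\<forall>j. 0 \<le> j \<and> j < Suc k \<longrightarrow> (b#y) ! j \<noteq> (0::nat)) \<longleftrightarrow> b \<noteq> 0 \<and> 0 \<notin> set y"
proof -
  have "(\<forall>j. 0 \<le> j \<and> j < Suc k \<longrightarrow> (b#y) ! j \<noteq> (0::nat)) \<longleftrightarrow> b \<noteq> 0 \<and> (\<forall>j. 0 \<le> j \<and> j < k \<longrightarrow> y ! j \<noteq> 0)"
  proof
    assume H: "\<forall>j. 0 \<le> j \<and> j < Suc k \<longrightarrow> (b#y) ! j \<noteq> (0::nat)"
    show "b \<noteq> 0 \<and> (\<forall>j. 0 \<le> j \<and> j < k \<longrightarrow> y ! j \<noteq> 0)"
      using H[rule_format, of 0] H[rule_format, of "Suc _"] by auto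
  next
    assume H: "b \<noteq> 0 \<and> (\<forall>j. 0 \<le> j \<and> j < k \<longrightarrow> y ! j \<noteq> 0)"
    show "\<forall>j. 0 \<le> j \<and> j < Suc k \<longrightarrow> (b#y) ! j \<noteq> (0::nat)"
    proof (intro allI impI)
      fix j assume "0 \<le> j \<and> j < Suc k"
      then show "(b#y) ! j \<noteq> 0" using H by (cases j) auto
    qed
  qed
  then show ?thesis using assms by (auto simp: in_set_conv_nth)
qed

lemma R2_cons:
  assumes "length x = k" "length y = k"
  shows "R2 (Suc k) (a#x) (b#y) \<longleftrightarrow> (a = b \<and> R2 k x y) \<or>
     (a = 0 \<and> x = replicate k 0 \<and> b \<noteq> 0 \<and> 0 \<notin> set y \<and> k \<ge> 1)"
proof -
  have "R2 (Suc k) (a#x) (b#y) \<longleftrightarrow>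
     (0 + 2 \<le> Suc k \<and> a#x = replicate (Suc k) 0 \<and> (\<forall>j. 0 \<le> j \<and> j < Suc k \<longrightarrow> (b#y) ! j \<noteq> 0))
     \<or> (\<exists>i. Suc i + 2 \<le> Suc k \<and> take (Suc i) (a#x) = take (Suc i) (b#y) \<and>
      drop (Suc i) (a#x) = replicate (Suc k - Suc i) 0 \<and> (\<forall>j. Suc i \<le> j \<and> j < Suc k \<longrightarrow> (b#y) ! j \<noteq> 0))"
    unfolding R2_def by (subst ex_split_nat) simp
  also have "\<dots> \<longleftrightarrow> (a = 0 \<and> x = replicate k 0 \<and> b \<noteq> 0 \<and> 0 \<notin> set y \<and> k \<ge> 1) \<or>
      (a = b \<and> R2 k x y)"
    unfolding all_shift all0[OF assms(2)] R2_def by auto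
  finally show ?thesis by blast
qed

lemma R3_cons:
  assumes "length x = k" "length y = k"
  shows "R3 (Suc k) (a#x) (b#y) \<longleftrightarrow> (a = b \<and> R3 k x y) \<or>
     (a \<noteq> 0 \<and> b \<noteq> 0 \<and> a \<noteq> b \<and> x = replicate k 0 \<and> y = replicate k 0 \<and> k \<ge> 1)"
proof -
  define P where "P i \<longleftrightarrow> 1 \<le> i \<and> i \<le> Suc k - 1 \<and> take (i - 1) (a#x) = take (i - 1) (b#y) \<and>
      (a#x) ! (i - 1) \<noteq> 0 \<and> (b#y) ! (i - 1) \<noteq> 0 \<and> (a#x) ! (i - 1) \<noteq> (b#y) ! (i - 1) \<and>
      drop i (a#x) = replicate (Suc k - i) 0 \<and> drop i (b#y) = replicate (Suc k - i) 0" for i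
  define Q where "Q i \<longleftrightarrow> 1 \<le> i \<and> i \<le> k - 1 \<and> take (i - 1) x = take (i - 1) y \<and>
      x ! (i - 1) \<noteq> 0 \<and> y ! (i - 1) \<noteq> 0 \<and> x ! (i - 1) \<noteq> y ! (i - 1) \<and>
      drop i x = replicate (k - i) 0 \<and> drop i y = replicate (k - i) 0" for i
  have L: "R3 (Suc k) (a#x) (b#y) \<longleftrightarrow> (\<exists>i. P i)" unfolding R3_def P_def by simp
  have R: "R3 k x y \<longleftrightarrow> (\<exists>i. Q i)" unfolding R3_def Q_def by simp
  have P0: "\<not> P 0" unfolding P_def by simp
  have Q0: "\<not> Q 0" unfolding Q_def by simp
  have P1: "P 1 \<longleftrightarrow> (a \<noteq> 0 \<and> b \<noteq> 0 \<and> a \<noteq> b \<and> x = replicate k 0 \<and> y = replicate k 0 \<and> k \<ge> 1)"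
    unfolding P_def by auto
  have PS: "P (Suc (Suc i)) \<longleftrightarrow> a = b \<and> Q (Suc i)" for i
    unfolding P_def Q_def by auto
  have "(\<exists>i. P i) \<longleftrightarrow> P 1 \<or> (\<exists>i. P (Suc (Suc i)))"
    using P0 by (metis One_nat_def not0_implies_Suc)
  moreover have "(\<exists>i. Q i) \<longleftrightarrow> (\<exists>i. Q (Suc i))"
    using Q0 by (metis not0_implies_Suc)
  ultimately show ?thesis using L R P1 PS by auto
qed

lemma Hadj_cons:
  assumes "k \<ge> 1" "length x = k" "length y = k"
  shows "Hadj (Suc k) (a#x) (b#y) \<longleftrightarrow> (a = b \<and> Hadj k x y) \<or>
     (a = 0 \<and> x = replicate k 0 \<and> b \<noteq> 0 \<and> 0 \<notin> set y) \<or>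
     (a \<noteq> 0 \<and> b \<noteq> 0 \<and> a \<noteq> b \<and> x = replicate k 0 \<and> y = replicate k 0)"
  unfolding Hadj_def R1_cons[OF assms(1)] R2_cons[OF assms(2,3)] R3_cons[OF assms(2,3)]
  using assms(1) by blast

lemma Vset_Suc: "a#x \<in> Vset n (Suc k) \<longleftrightarrow> a < n \<and> x \<in> Vset n k"
  unfolding Vset_def by auto

lemma Vset_len: "x \<in> Vset n k \<Longrightarrow> length x = k"
  unfolding Vset_def by auto

lemma Vset_finite: "finite (Vset n k)"
proof -
  have "Vset n k = {xs. set xs \<subseteq> {0..<n} \<and> length xs = k}" unfolding Vset_def by auto
  then show ?thesis using finite_lists_length_eq[of "{0..<n}" k] by simp
qed

lemma Eset_finite: "finite (Eset n k)"
proof -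
  have "Eset n k \<subseteq> Pow (Vset n k)" unfolding Eset_def by auto
  moreover have "finite (Pow (Vset n k))" using Vset_finite by simp
  ultimately show ?thesis by (rule finite_subset)
qed

definition S1 where "S1 n k = (\<lambda>(a,e). Cons a ` e) ` ({0..<n} \<times> Eset n k)"
definition S2 where "S2 n k = (\<lambda>y. {replicate (Suc k) (0::nat), y}) ` {y. set y \<subseteq> {1..<n} \<and> length y = Suc k}"
definition S3 where "S3 n k = (\<lambda>A. (\<lambda>a. a # replicate k (0::nat)) ` A) ` {A. A \<subseteq> {1..<n} \<and> card A = 2}"

lemma nz_iff: "set (y::nat list) \<subseteq> {1..<n} \<longleftrightarrow> (\<forall>v\<in>set y. v < n) \<and> 0 \<notin> set y"
proof -
  have "v \<in> {1..<n} \<longleftrightarrow> v < n \<and> v \<noteq> 0" for v :: nat by auto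
  then show ?thesis unfolding subset_iff by metis
qed

lemma Eset_memI:
  assumes "x \<in> Vset n k" "y \<in> Vset n k" "x \<noteq> y" "Hadj k x y \<or> Hadj k y x"
  shows "{x,y} \<in> Eset n k"
  unfolding Eset_def using assms by blast

lemma Eset_memE:
  assumes "e \<in> Eset n k"
  shows "\<exists>x y. e = {x,y} \<and> x \<in> Vset n k \<and> y \<in> Vset n k \<and> x \<noteq> y \<and> (Hadj k x y \<or> Hadj k y x)"
  using assms unfolding Eset_def by blast

lemma S1_memI: "a < n \<Longrightarrow> e' \<in> Eset n k \<Longrightarrow> Cons a ` e' \<in> S1 n k"
  unfolding S1_def by (rule image_eqI[where x="(a,e')"]) auto

lemma Eset_Suc:
  assumes "k \<ge> 1"
  shows "Eset n (Suc k) = S1 n k \<union> S2 n k \<union> S3 n k"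
proof
  show "Eset n (Suc k) \<subseteq> S1 n k \<union> S2 n k \<union> S3 n k"
  proof
    fix e assume "e \<in> Eset n (Suc k)"
    then obtain x y where e: "e = {x,y}" and xV: "x \<in> Vset n (Suc k)" and yV: "y \<in> Vset n (Suc k)"
      and xy: "x \<noteq> y" and H: "Hadj (Suc k) x y \<or> Hadj (Suc k) y x"
      unfolding Eset_def by blast
    obtain a x' where x: "x = a#x'" using Vset_len[OF xV] by (cases x) auto
    obtain b y' where y: "y = b#y'" using Vset_len[OF yV] by (cases y) auto
    have ax: "a < n" "x' \<in> Vset n k" using xV x Vset_Suc by auto
    have by': "b < n" "y' \<in> Vset n k" using yV y Vset_Suc by auto
    have lx: "length x' = k" and ly: "length y' = k" using ax by' Vset_len by auto
    have H': "(a = b \<and> (Hadj k x' y' \<or> Hadj k y' x')) \<or>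
     (a = 0 \<and> x' = replicate k 0 \<and> b \<noteq> 0 \<and> 0 \<notin> set y') \<or>
     (b = 0 \<and> y' = replicate k 0 \<and> a \<noteq> 0 \<and> 0 \<notin> set x') \<or>
     (a \<noteq> 0 \<and> b \<noteq> 0 \<and> a \<noteq> b \<and> x' = replicate k 0 \<and> y' = replicate k 0)"
      using H unfolding x y Hadj_cons[OF assms lx ly] Hadj_cons[OF assms ly lx] by blast
    show "e \<in> S1 n k \<union> S2 n k \<union> S3 n k"
    proof -
      { assume c: "a = b \<and> (Hadj k x' y' \<or> Hadj k y' x')"
        moreover have "x' \<noteq> y'" using xy x y c by simp
        ultimately have "{x', y'} \<in> Eset n k" using ax(2) by'(2) by (intro Eset_memI) auto
        moreover have "e = Cons a ` {x', y'}" using e x y c by simp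
        ultimately have "e \<in> S1 n k" using ax(1) S1_memI by metis }
      moreover
      { assume c: "a = 0 \<and> x' = replicate k 0 \<and> b \<noteq> 0 \<and> 0 \<notin> set y'"
        then have "set y \<subseteq> {1..<n}" "length y = Suc k" using by' y ly unfolding nz_iff Vset_def by auto
        moreover have "e = {replicate (Suc k) 0, y}" using e x c by simp
        ultimately have "e \<in> S2 n k" unfolding S2_def by blast }
      moreover
      { assume c: "b = 0 \<and> y' = replicate k 0 \<and> a \<noteq> 0 \<and> 0 \<notin> set x'"
        then have "set x \<subseteq> {1..<n}" "length x = Suc k" using ax x lx unfolding nz_iff Vset_def by auto
        moreover have "e = {replicate (Suc k) 0, x}" using e y c by auto
        ultimately have "e \<in> S2 n k" unfolding S2_def by blast }
      moreover
      { assume c: "a \<noteq> 0 \<and> b \<noteq> 0 \<and> a \<noteq> b \<and> x' = replicate k 0 \<and> y' = replicate k 0"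
        then have "{a,b} \<subseteq> {1..<n} \<and> card {a,b} = 2" using ax by' by auto
        moreover have "e = (\<lambda>a. a # replicate k 0) ` {a,b}" using e x y c by auto
        ultimately have "e \<in> S3 n k" unfolding S3_def by blast }
      ultimately show ?thesis using H' by blast
    qed
  qed
next
  show "S1 n k \<union> S2 n k \<union> S3 n k \<subseteq> Eset n (Suc k)"
  proof
    fix e assume "e \<in> S1 n k \<union> S2 n k \<union> S3 n k"
    moreover
    { assume "e \<in> S1 n k"
      then obtain p where p: "p \<in> {0..<n} \<times> Eset n k" and ep: "e = (\<lambda>(a,e). Cons a ` e) p"
        unfolding S1_def by (rule imageE)
      obtain a e' where pe: "p = (a, e')" by (cases p)
      have a: "a < n" and e': "e' \<in> Eset n k" and e: "e = Cons a ` e'" using p ep pe by auto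
      obtain x y where xy0: "e' = {x,y}" and xV: "x \<in> Vset n k" and yV: "y \<in> Vset n k"
        and xy: "x \<noteq> y" and H: "Hadj k x y \<or> Hadj k y x"
        using Eset_memE[OF e'] by blast
      have H2: "Hadj (Suc k) (a#x) (a#y) \<or> Hadj (Suc k) (a#y) (a#x)"
        using H Hadj_cons[OF assms Vset_len[OF xV] Vset_len[OF yV], of a a]
          Hadj_cons[OF assms Vset_len[OF yV] Vset_len[OF xV], of a a] by blast
      have "{a#x, a#y} \<in> Eset n (Suc k)"
        using xV yV a xy H2 by (intro Eset_memI) (auto simp: Vset_Suc)
      moreover have "e = {a#x, a#y}" using e xy0 by simp
      ultimately have "e \<in> Eset n (Suc k)" by simp }
    moreover
    { assume "e \<in> S2 n k"
      then obtain y where y: "set y \<subseteq> {1..<n}" "length y = Suc k" and e: "e = {replicate (Suc k) 0, y}"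
        unfolding S2_def by auto
      obtain b y' where yy: "y = b#y'" using y by (cases y) auto
      have b: "b \<noteq> 0" "b < n" "0 \<notin> set y'" "\<forall>v\<in>set y'. v < n" "length y' = k"
        using y unfolding yy by auto
      have "Hadj (Suc k) (0 # replicate k 0) (b#y')"
        using Hadj_cons[OF assms _ b(5), of "replicate k 0" 0 b] b by simp
      moreover have "replicate (Suc k) 0 \<in> Vset n (Suc k)" "y \<in> Vset n (Suc k)"
        using y assms(1) \<open>b < n\<close> unfolding Vset_def yy by (auto simp: subset_iff)
      moreover have "replicate (Suc k) 0 \<noteq> y" using yy b by auto
      ultimately have "e \<in> Eset n (Suc k)" unfolding Eset_def e yy by fastforce }
    moreover
    { assume "e \<in> S3 n k"
      then obtain A where A: "A \<subseteq> {1..<n}" "card A = 2" and e: "e = (\<lambda>a. a # replicate k 0) ` A"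
        unfolding S3_def by auto
      then obtain a b where ab: "A = {a,b}" "a \<noteq> b" by (meson card_2_iff)
      have abn: "a \<noteq> 0" "b \<noteq> 0" "a < n" "b < n" using A ab by auto
      have "Hadj (Suc k) (a # replicate k 0) (b # replicate k 0)"
        using Hadj_cons[OF assms, of "replicate k 0" "replicate k 0" a b] abn ab by simp
      moreover have "a # replicate k 0 \<in> Vset n (Suc k)" "b # replicate k 0 \<in> Vset n (Suc k)"
        using abn assms unfolding Vset_def by auto
      ultimately have "e \<in> Eset n (Suc k)" unfolding Eset_def e ab using ab by fastforce }
    ultimately show "e \<in> Eset n (Suc k)" by blast
  qed
qed

lemma card_pairs_image:
  assumes "inj f" "finite S"
  shows "card ((\<lambda>A. f ` A) ` {A. A \<subseteq> S \<and> card A = 2}) = card S choose 2"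
proof -
  have "inj_on ((`) f) {A. A \<subseteq> S \<and> card A = 2}"
    by (rule inj_on_image) (rule inj_on_subset[OF assms(1)], simp)
  then show ?thesis using card_image n_subsets[OF assms(2)] by metis
qed

lemma Eset_one: "Eset n 1 = (\<lambda>A. (\<lambda>a. [a]) ` A) ` {A. A \<subseteq> {0..<n} \<and> card A = 2}"
proof
  show "Eset n 1 \<subseteq> (\<lambda>A. (\<lambda>a. [a]) ` A) ` {A. A \<subseteq> {0..<n} \<and> card A = 2}"
  proof
    fix e assume "e \<in> Eset n 1"
    then obtain x y where e: "e = {x,y}" and xV: "x \<in> Vset n 1" and yV: "y \<in> Vset n 1" and xy: "x \<noteq> y"
      using Eset_memE by blast
    obtain a where x: "x = [a]" using Vset_len[OF xV] by (cases x) auto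
    obtain b where y: "y = [b]" using Vset_len[OF yV] by (cases y) auto
    have "{a,b} \<subseteq> {0..<n} \<and> card {a,b} = 2" using xV yV xy unfolding x y Vset_def by auto
    moreover have "e = (\<lambda>a. [a]) ` {a,b}" using e x y by simp
    ultimately show "e \<in> (\<lambda>A. (\<lambda>a. [a]) ` A) ` {A. A \<subseteq> {0..<n} \<and> card A = 2}" by blast
  qed
next
  show "(\<lambda>A. (\<lambda>a. [a]) ` A) ` {A. A \<subseteq> {0..<n} \<and> card A = 2} \<subseteq> Eset n 1"
  proof
    fix e assume "e \<in> (\<lambda>A. (\<lambda>a. [a]) ` A) ` {A. A \<subseteq> {0..<n} \<and> card A = 2}"
    then obtain A where A: "A \<subseteq> {0..<n}" "card A = 2" and e: "e = (\<lambda>a. [a]) ` A" by blast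
    then obtain a b where ab: "A = {a,b}" "a \<noteq> b" by (meson card_2_iff)
    have "Hadj 1 [a] [b]" unfolding Hadj_def R1_def using ab by simp
    moreover have "[a] \<in> Vset n 1" "[b] \<in> Vset n 1" using A ab unfolding Vset_def by auto
    ultimately have "{[a],[b]} \<in> Eset n 1" using ab by (intro Eset_memI) auto
    then show "e \<in> Eset n 1" using e ab by simp
  qed
qed

lemma card_Eset_one: "card (Eset n 1) = n choose 2"
  unfolding Eset_one by (subst card_pairs_image) (auto simp: inj_def)

lemma Eset_nonempty: "e \<in> Eset n k \<Longrightarrow> e \<noteq> {}"
  using Eset_memE by blast

lemma card_S1: "card (S1 n k) = n * card (Eset n k)"
proof -
  have "inj_on (\<lambda>(a,e). Cons a ` e) ({0..<n} \<times> Eset n k)"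
  proof (rule inj_onI, clarify)
    fix a e b e' assume e: "e \<in> Eset n k" and e': "e' \<in> Eset n k" and eq: "Cons a ` e = Cons b ` e'"
    obtain u where u: "u \<in> e" using Eset_nonempty[OF e] by blast
    then have "a # u \<in> Cons b ` e'" using eq by blast
    then have ab: "a = b" by blast
    have "e = e'"
    proof -
      have "inj (Cons a)" by (simp add: inj_def)
      then show ?thesis using eq ab by (simp add: inj_image_eq_iff)
    qed
    then show "a = b \<and> e = e'" using ab by simp
  qed
  then show ?thesis unfolding S1_def
    by (simp add: card_image card_cartesian_product)
qed

lemma card_S2: "card (S2 n k) = (n - 1) ^ Suc k"
proof -
  let ?Y = "{y. set y \<subseteq> {1..<n} \<and> length y = Suc k}"
  have "inj_on (\<lambda>y. {replicate (Suc k) 0, y}) ?Y"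
  proof (rule inj_onI)
    fix y y' assume y: "y \<in> ?Y" and y': "y' \<in> ?Y" and eq: "{replicate (Suc k) 0, y} = {replicate (Suc k) 0, y'}"
    have "replicate (Suc k) 0 \<noteq> y" using y by (cases y) auto
    moreover have "replicate (Suc k) 0 \<noteq> y'" using y' by (cases y') auto
    ultimately show "y = y'" using eq by (metis doubleton_eq_iff)
  qed
  then have "card (S2 n k) = card ?Y" unfolding S2_def by (rule card_image)
  also have "\<dots> = (n - 1) ^ Suc k" using card_lists_length_eq[of "{1..<n}" "Suc k"] by simp
  finally show ?thesis .
qed

lemma card_S3: "card (S3 n k) = (n - 1) choose 2"
  unfolding S3_def by (subst card_pairs_image) (auto simp: inj_def)

lemma S1_hd: "e \<in> S1 n k \<Longrightarrow> u \<in> e \<Longrightarrow> v \<in> e \<Longrightarrow> hd u = hd v"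
  unfolding S1_def by auto

lemma S2_hd: "e \<in> S2 n k \<Longrightarrow> \<exists>u\<in>e. \<exists>v\<in>e. hd u \<noteq> hd v \<and> hd u = 0"
proof -
  assume "e \<in> S2 n k"
  then obtain y where y: "set y \<subseteq> {1..<n}" "length y = Suc k" and e: "e = {replicate (Suc k) 0, y}"
    unfolding S2_def by blast
  obtain b y' where "y = b # y'" using y by (cases y) auto
  then have "hd y \<noteq> 0" using y by auto
  then show ?thesis using e by auto
qed

lemma S3_hd: "e \<in> S3 n k \<Longrightarrow> (\<exists>u\<in>e. \<exists>v\<in>e. hd u \<noteq> hd v) \<and> (\<forall>u\<in>e. hd u \<noteq> 0)"
proof -
  assume "e \<in> S3 n k"
  then obtain A where A: "A \<subseteq> {1..<n}" "card A = 2" and e: "e = (\<lambda>a. a # replicate k (0::nat)) ` A"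
    unfolding S3_def by blast
  then obtain a b where ab: "A = {a,b}" "a \<noteq> b" by (meson card_2_iff)
  show ?thesis using e ab A by auto
qed

lemma card_Eset_Suc:
  assumes "k \<ge> 1"
  shows "card (Eset n (Suc k)) = n * card (Eset n k) + (n - 1) ^ Suc k + ((n - 1) choose 2)"
proof -
  have fin1: "finite (S1 n k)" unfolding S1_def using Eset_finite by simp
  have fin2: "finite (S2 n k)" unfolding S2_def using finite_lists_length_eq[of "{1..<n}" "Suc k"] by simp
  have fin3: "finite (S3 n k)" unfolding S3_def by simp
  have d12: "S1 n k \<inter> S2 n k = {}" using S1_hd S2_hd by blast
  have d13: "S1 n k \<inter> S3 n k = {}" using S1_hd S3_hd by blast
  have d23: "S2 n k \<inter> S3 n k = {}" using S2_hd S3_hd by blast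
  have "card (S1 n k \<union> S2 n k \<union> S3 n k) = card (S1 n k) + card (S2 n k) + card (S3 n k)"
    using fin1 fin2 fin3 d12 d13 d23 by (simp add: card_Un_disjoint Int_Un_distrib2)
  then show ?thesis using Eset_Suc[OF assms] card_S1 card_S2 card_S3 by simp
qed

lemma choose2_real: "real (m choose 2) = real m * (real m - 1) / 2"
proof -
  have "even (m * (m - 1))" by (cases "even m") auto
  then have "real (m * (m - 1) div 2) = real (m * (m - 1)) / 2"
    by (simp add: real_of_nat_div)
  then show ?thesis unfolding choose_two by (cases m) (auto simp: algebra_simps)
qed

theorem mainTheorem1:
  fixes n k :: nat
  assumes "n \<ge> 2" and "k \<ge> 1"
  shows "real (card (Eset n k)) =
    3 / 2 * real n ^ (k + 1) - (real n - 1) ^ (k + 1) - 2 * real n ^ k - real n / 2 + 1"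
  using assms(2)
proof (induction k rule: dec_induct)
  case base
  show ?case using card_Eset_one[of n] choose2_real[of n]
    by (simp add: power2_eq_square field_simps)
next
  case (step m)
  have "real (card (Eset n (Suc m))) = real n * real (card (Eset n m)) + (real n - 1) ^ Suc m + (real n - 1) * (real n - 2) / 2"
    using card_Eset_Suc[OF step(1)] choose2_real[of "n - 1"] assms(1)
    by (simp add: of_nat_diff)
  also have "\<dots> = 3 / 2 * real n ^ (Suc m + 1) - (real n - 1) ^ (Suc m + 1) - 2 * real n ^ Suc m - real n / 2 + 1"
    unfolding step(3) by (simp add: field_simps)
  finally show ?case .
qed

end
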